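(* Let $V$ be a finite ground set with $n=|V|$, let $f:2^V\to\mathbb{R}_{\ge 0}$ be monotone submodular, let $k\ge 1$ be an integer, and let $OPT=\max_{A\subseteq V,|A|\le k} f(A)$. Run the following randomized procedure (Algorithm 1) with threshold $\tau=\frac{OPT}{2k}$: (i) draw a random set $S\subseteq V$ containing each element independently with probability $p=4\sqrt{k/n}$, and independently partition $V$ at random into sets $V_1,\dots,V_m$ (one per machine); (ii) compute $G_0=\textsc{ThresholdGreedy}(S,\emptyset,\tau)$; (iii) for each $i=1,\dots,m$, set $R_i=\textsc{ThresholdFilter}(V_i,G_0,\tau)$ if $|G_0|<k$, and $R_i=\emptyset$ otherwise; (iv) output $G=\textsc{ThresholdGreedy}\big(\bigcup_{i=1}^m R_i,\,G_0,\,\tau\big)$. Then the approximation ratio of this algorithm is at least $1/2$; namely, for every outcome of the random choices, the output satisfies $f(G)\ge \frac12\, OPT$.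
   Context: A function $f:2^V\to\mathbb{R}_{\ge0}$ is submodular if $f(A\cup\{e\})-f(A)\ge f(B\cup\{e\})-f(B)$ for all $A\subseteq B\subseteq V$ and $e\notin B$, and monotone if $f(A\cup\{e\})-f(A)\ge 0$ for all $A$ and $e\notin A$. For $A\subseteq V$ and $e\in V$ write $f_A(e)=f(A\cup\{e\})-f(A)$ (the marginal of $e$ with respect to $A$). Fix a total order on $V$; all sets are scanned in this order. $\textsc{ThresholdGreedy}(T,G,\tau)$ (for $T\subseteq V$, $G\subseteq V$ with $|G|\le k$, $\tau>0$): start with $G'=G$; scan the elements $e\in T$ in the fixed order, and whenever $f_{G'}(e)\ge\tau$ and $|G'|<k$, replace $G'$ by $G'\cup\{e\}$; return $G'$. $\textsc{ThresholdFilter}(T,G,\tau)$ returns $\{e\in T: f_G(e)\ge\tau\}$. Here $m$ is the number of machines (the paper takes $m=\sqrt{n/k}$). *)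

theory Defs
  imports Complex_Main
begin

definition monotone_on_sets :: "'a set \<Rightarrow> ('a set \<Rightarrow> real) \<Rightarrow> bool" where
  "monotone_on_sets V f \<longleftrightarrow>
     (\<forall>A e. A \<subseteq> V \<and> e \<in> V \<and> e \<notin> A \<longrightarrow> f (A \<union> {e}) - f A \<ge> 0)"

definition submodular :: "'a set \<Rightarrow> ('a set \<Rightarrow> real) \<Rightarrow> bool" where
  "submodular V f \<longleftrightarrow>
     (\<forall>A B e. A \<subseteq> B \<and> B \<subseteq> V \<and> e \<in> V \<and> e \<notin> B \<longrightarrow>
        f (A \<union> {e}) - f A \<ge> f (B \<union> {e}) - f B)"

definition marginal :: "('a set \<Rightarrow> real) \<Rightarrow> 'a set \<Rightarrow> 'a \<Rightarrow> real" where
  "marginal f A e = f (A \<union> {e}) - f A"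

fun tg_scan :: "('a set \<Rightarrow> real) \<Rightarrow> nat \<Rightarrow> real \<Rightarrow> 'a list \<Rightarrow> 'a set \<Rightarrow> 'a set" where
  "tg_scan f k tau [] G = G"
| "tg_scan f k tau (e # es) G =
     tg_scan f k tau es (if marginal f G e \<ge> tau \<and> card G < k then G \<union> {e} else G)"

text \<open>ThresholdGreedy(T,G,tau): the fixed total order on V is the linorder of the element type.\<close>
definition threshold_greedy ::
  "('a::linorder set \<Rightarrow> real) \<Rightarrow> nat \<Rightarrow> 'a set \<Rightarrow> 'a set \<Rightarrow> real \<Rightarrow> 'a set" where
  "threshold_greedy f k T G tau = tg_scan f k tau (sorted_list_of_set T) G"

definition threshold_filter ::
  "('a set \<Rightarrow> real) \<Rightarrow> 'a set \<Rightarrow> 'a set \<Rightarrow> real \<Rightarrow> 'a set" where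
  "threshold_filter f T G tau = {e \<in> T. marginal f G e \<ge> tau}"

definition OPT :: "'a set \<Rightarrow> ('a set \<Rightarrow> real) \<Rightarrow> nat \<Rightarrow> real" where
  "OPT V f k = Max (f ` {A. A \<subseteq> V \<and> card A \<le> k})"

end

theory Submission
  imports Defs
begin

lemma scan_sub: "G \<subseteq> tg_scan f k tau es G"
  by (induction es arbitrary: G) (auto, blast)

lemma scan_range: "tg_scan f k tau es G \<subseteq> G \<union> set es"
proof (induction es arbitrary: G)
  case Nil then show ?case by simp
next
  case (Cons e es)
  show ?case using Cons.IH[of "if marginal f G e \<ge> tau \<and> card G < k then G \<union> {e} else G"]
    by auto
qed

lemma scan_val:
  assumes "finite G"
  shows "f (tg_scan f k tau es G) \<ge> f G + tau * (real (card (tg_scan f k tau es G)) - real (card G))"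
  using assms
proof (induction es arbitrary: G)
  case Nil then show ?case by simp
next
  case (Cons e es)
  define G' where "G' = (if marginal f G e \<ge> tau \<and> card G < k then G \<union> {e} else G)"
  have fin: "finite G'" using Cons.prems by (simp add: G'_def)
  have IH: "f (tg_scan f k tau es G') \<ge> f G' + tau * (real (card (tg_scan f k tau es G')) - real (card G'))"
    using Cons.IH[OF fin] .
  have step: "f G' \<ge> f G + tau * (real (card G') - real (card G))"
  proof (cases "marginal f G e \<ge> tau \<and> card G < k \<and> e \<notin> G")
    case True
    then have "G' = insert e G" by (simp add: G'_def)
    then show ?thesis using True Cons.prems by (simp add: marginal_def)
  next
    case False
    then have "G' = G" by (auto simp: G'_def)
    then show ?thesis by simp
  qed
  have "tg_scan f k tau (e # es) G = tg_scan f k tau es G'" by (simp add: G'_def)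
  then show ?case using IH step by (simp add: algebra_simps)
qed

lemma scan_marg:
  assumes "finite G" "G \<subseteq> V" "set es \<subseteq> V" "submodular V f" "tau > 0"
    and "card (tg_scan f k tau es G) < k" "e \<in> set es"
  shows "marginal f (tg_scan f k tau es G) e < tau"
  using assms
proof (induction es arbitrary: G)
  case Nil then show ?case by simp
next
  case (Cons a es)
  define G' where "G' = (if marginal f G a \<ge> tau \<and> card G < k then G \<union> {a} else G)"
  have eq: "tg_scan f k tau (a # es) G = tg_scan f k tau es G'" by (simp add: G'_def)
  have fin: "finite G'" using Cons.prems by (simp add: G'_def)
  have G'V: "G' \<subseteq> V" using Cons.prems by (auto simp: G'_def)
  define B where "B = tg_scan f k tau es G'"
  have BV: "B \<subseteq> V" using scan_range[of f k tau es G'] G'V Cons.prems(3) unfolding B_def by auto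
  have finB: "finite B" using scan_range[of f k tau es G'] fin unfolding B_def
    using finite_subset by blast
  have GB: "G \<subseteq> B" using scan_sub[of G' f k tau es] unfolding B_def G'_def by auto
  have cardB: "card B < k" using Cons.prems(6) eq B_def by simp
  show ?case
  proof (cases "e = a")
    case True
    show ?thesis
    proof (cases "e \<in> B")
      case True
      then show ?thesis using Cons.prems(5) eq B_def by (simp add: marginal_def insert_absorb)
    next
      case False
      have "card G \<le> card B" using card_mono[OF finB GB] .
      then have "card G < k" using cardB by simp
      have "e \<notin> G'" using False scan_sub[of G' f k tau es] B_def by auto
      then have lt: "marginal f G a < tau" using \<open>card G < k\<close> True by (auto simp: G'_def split: if_splits)
      have "f (G \<union> {e}) - f G \<ge> f (B \<union> {e}) - f B"
        using Cons.prems(4) GB BV False True Cons.prems(3) unfolding submodular_def by auto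
      then show ?thesis using lt True eq B_def by (simp add: marginal_def)
    qed
  next
    case False
    then have "e \<in> set es" using Cons.prems(7) by simp
    then show ?thesis using Cons.IH[OF fin G'V _ Cons.prems(4,5)] Cons.prems(3,6) eq by simp
  qed
qed

lemma mono_sets:
  assumes "monotone_on_sets V f" "finite B" "A \<subseteq> B" "B \<subseteq> V"
  shows "f A \<le> f B"
proof -
  have "\<forall>C. finite C \<longrightarrow> A \<union> C \<subseteq> V \<longrightarrow> f A \<le> f (A \<union> C)"
  proof (intro allI impI)
    fix C :: "'a set" assume "finite C" "A \<union> C \<subseteq> V"
    then show "f A \<le> f (A \<union> C)"
    proof (induction C rule: finite_induct)
      case empty then show ?case by simp
    next
      case (insert x C)
      show ?case
      proof (cases "x \<in> A \<union> C")
        case True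
        then have "A \<union> insert x C = A \<union> C" by auto
        then show ?thesis using insert by auto
      next
        case False
        have "f ((A \<union> C) \<union> {x}) - f (A \<union> C) \<ge> 0"
          using assms(1) False insert.prems unfolding monotone_on_sets_def by auto
        then show ?thesis using insert by auto
      qed
    qed
  qed
  then have "f A \<le> f (A \<union> B)" using assms by blast
  then show ?thesis using assms(3) by (simp add: Un_absorb1)
qed

lemma sum_marg:
  assumes "monotone_on_sets V f" "submodular V f" "G \<subseteq> V" "finite A" "A \<subseteq> V"
  shows "f (G \<union> A) - f G \<le> (\<Sum>x\<in>A. marginal f G x)"
  using assms(4,5)
proof (induction A rule: finite_induct)
  case empty then show ?case by simp
next
  case (insert a A)
  have mg: "marginal f G a \<ge> 0"
  proof (cases "a \<in> G")
    case True then show ?thesis by (simp add: marginal_def insert_absorb)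
  next
    case False then show ?thesis using assms(1) insert.prems unfolding monotone_on_sets_def marginal_def using assms(3) by auto
  qed
  have "f (G \<union> insert a A) - f (G \<union> A) \<le> marginal f G a"
  proof (cases "a \<in> G \<union> A")
    case True
    then have "G \<union> insert a A = G \<union> A" by auto
    then show ?thesis using mg by simp
  next
    case False
    have "f (G \<union> {a}) - f G \<ge> f ((G \<union> A) \<union> {a}) - f (G \<union> A)"
      using assms(2,3) insert.prems False unfolding submodular_def by auto
    moreover have "(G \<union> A) \<union> {a} = G \<union> insert a A" by auto
    ultimately show ?thesis by (simp add: marginal_def)
  qed
  then show ?case using insert by simp
qed

theorem lemma1:
  fixes V :: "'a::linorder set" and f :: "'a set \<Rightarrow> real" and k m :: nat
    and S :: "'a set" and P :: "nat \<Rightarrow> 'a set"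
  assumes "finite V"
    and "k \<ge> 1"
    and "\<forall>A. A \<subseteq> V \<longrightarrow> f A \<ge> 0"
    and "monotone_on_sets V f"
    and "submodular V f"
    and "S \<subseteq> V"
    and "(\<Union>i\<in>{1..m}. P i) = V"
    and "\<forall>i\<in>{1..m}. \<forall>j\<in>{1..m}. i \<noteq> j \<longrightarrow> P i \<inter> P j = {}"
  defines "tau \<equiv> OPT V f k / (2 * real k)"
  defines "G0 \<equiv> threshold_greedy f k S {} tau"
  defines "R \<equiv> (\<lambda>i. if card G0 < k then threshold_filter f (P i) G0 tau else {})"
  defines "G \<equiv> threshold_greedy f k (\<Union>i\<in>{1..m}. R i) G0 tau"
  shows "f G \<ge> OPT V f k / 2"
proof -
  define U where "U = (\<Union>i\<in>{1..m}. R i)"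
  have finS: "finite S" using assms(1,6) finite_subset by blast
  have UV: "U \<subseteq> V" unfolding U_def R_def threshold_filter_def using assms(7) by auto
  have finU: "finite U" using UV assms(1) finite_subset by blast
  have setS: "set (sorted_list_of_set S) = S" using finS by simp
  have setU: "set (sorted_list_of_set U) = U" using finU by simp
  have G0V: "G0 \<subseteq> V" using scan_range[of f k tau "sorted_list_of_set S" "{}"] setS assms(6)
    unfolding G0_def threshold_greedy_def by auto
  have finG0: "finite G0" using G0V assms(1) finite_subset by blast
  have GV: "G \<subseteq> V" using scan_range[of f k tau "sorted_list_of_set U" G0] setU UV G0V
    unfolding G_def threshold_greedy_def U_def[symmetric] by auto
  have finG: "finite G" using GV assms(1) finite_subset by blast
  have G0G: "G0 \<subseteq> G" unfolding G_def threshold_greedy_def by (rule scan_sub)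
  have v1: "f G0 \<ge> f {} + tau * real (card G0)"
    using scan_val[where G="{}" and f=f and k=k and tau=tau and es="sorted_list_of_set S"] unfolding G0_def threshold_greedy_def by simp
  have v2: "f G \<ge> f G0 + tau * (real (card G) - real (card G0))"
    using scan_val[OF finG0, where f=f and k=k and tau=tau and es="sorted_list_of_set U"]
    unfolding G_def threshold_greedy_def U_def[symmetric] by simp
  have f0: "f {} \<ge> 0" using assms(3) by auto
  have fG: "f G \<ge> 0" using assms(3) GV by auto
  define C where "C = {A. A \<subseteq> V \<and> card A \<le> k}"
  have finC: "finite C" unfolding C_def using assms(1) by auto
  have neC: "{} \<in> C" unfolding C_def by auto
  have "OPT V f k \<in> f ` C" unfolding OPT_def C_def[symmetric] using finC neC
    by (intro Max_in) auto
  then obtain Astar where As: "Astar \<subseteq> V" "card Astar \<le> k" "f Astar = OPT V f k"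
    unfolding C_def by auto
  show ?thesis
  proof (cases "OPT V f k > 0")
    case False
    then show ?thesis using fG by simp
  next
    case True
    have taupos: "tau > 0" unfolding tau_def using True assms(2) by simp
    have ktau: "real k * tau = OPT V f k / 2" unfolding tau_def using assms(2) by simp
    show ?thesis
    proof (cases "card G \<ge> k")
      case True
      have "f G \<ge> tau * real (card G)" using v1 v2 f0 by (simp add: algebra_simps)
      moreover have "tau * real (card G) \<ge> tau * real k" using True taupos by simp
      ultimately show ?thesis using ktau by (simp add: algebra_simps)
    next
      case False
      have cG0: "card G0 < k" using card_mono[OF finG G0G] False by simp
      have marg: "marginal f G y < tau" if yV: "y \<in> V" for y
      proof -
        obtain i where i: "i \<in> {1..m}" "y \<in> P i" using yV assms(7) by blast
        show ?thesis
        proof (cases "marginal f G0 y \<ge> tau")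
          case True
          then have "y \<in> U" unfolding U_def R_def threshold_filter_def using cG0 i by auto
          then show ?thesis
            using scan_marg[OF finG0 G0V _ assms(5) taupos, where es="sorted_list_of_set U" and e=y and k=k] setU UV False
            unfolding G_def threshold_greedy_def U_def[symmetric] by simp
        next
          case lt: False
          show ?thesis
          proof (cases "y \<in> G")
            case True then show ?thesis using taupos by (simp add: marginal_def insert_absorb)
          next
            case False
            have "f (G0 \<union> {y}) - f G0 \<ge> f (G \<union> {y}) - f G"
              using assms(5) G0G GV False yV unfolding submodular_def by auto
            then show ?thesis using lt by (simp add: marginal_def)
          qed
        qed
      qed
      have finA: "finite Astar" using As(1) assms(1) finite_subset by blast
      have "f (G \<union> Astar) - f G \<le> (\<Sum>x\<in>Astar. marginal f G x)"
        using sum_marg[OF assms(4,5) GV finA As(1)] .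
      also have "\<dots> \<le> (\<Sum>x\<in>Astar. tau)"
        using marg As(1) by (intro sum_mono) (auto intro: less_imp_le)
      also have "\<dots> = real (card Astar) * tau" by simp
      also have "\<dots> \<le> real k * tau" using As(2) taupos by simp
      finally have "f (G \<union> Astar) - f G \<le> OPT V f k / 2" using ktau by simp
      moreover have "f Astar \<le> f (G \<union> Astar)"
        using mono_sets[OF assms(4)] finG finA GV As(1) by auto
      ultimately show ?thesis using As(3) by simp
    qed
  qed
qed

end
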